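(* Let $X$ be a path-connected, compact, metrizable topological space, $x_0\in X$, $n\geq 1$. Then the homeomorphism type of $\pi_n(X,x_0)$ with the topology induced by the pseudometric $\rho$ is independent of the choice of metric $d$ inducing the topology of $X$.
   Context: For a metric $d$ on $X$: $\Omega^n(X,x_0)$ is the set of continuous maps $\alpha:[0,1]^n\to X$ with $\alpha(\partial[0,1]^n)=\{x_0\}$, with uniform metric $\mu(\alpha,\beta)=\sup_t d(\alpha(t),\beta(t))$, and $\rho(a,b)=\inf\{\mu(\alpha,\beta)\mid\alpha\in a,\beta\in b\}$ for $a,b\in\pi_n(X,x_0)$, a pseudometric; its topology is generated by open $\rho$-balls. *)

theory Defs
  imports "HOL-Analysis.Analysis"
begin

definition unit_cube :: "(real^'n) set" where
  "unit_cube = cbox 0 1"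

text \<open>Omega^n(X,x0): continuous maps of the cube into X sending the boundary to x0.
  To make maps genuine functions on the cube, we normalise them to be x0 outside the cube.\<close>

definition Omega :: "'a topology \<Rightarrow> 'a \<Rightarrow> ((real^'n) \<Rightarrow> 'a) set" where
  "Omega X x0 = {\<alpha>. continuous_map (top_of_set unit_cube) X \<alpha> \<and>
                     \<alpha> ` frontier unit_cube \<subseteq> {x0} \<and>
                     (\<forall>t. t \<notin> unit_cube \<longrightarrow> \<alpha> t = x0)}"

definition rel_homotopic :: "'a topology \<Rightarrow> 'a \<Rightarrow> ((real^'n) \<Rightarrow> 'a) \<Rightarrow> ((real^'n) \<Rightarrow> 'a) \<Rightarrow> bool" where
  "rel_homotopic X x0 \<alpha> \<beta> \<longleftrightarrow>
     homotopic_with (\<lambda>h. \<forall>t\<in>frontier unit_cube. h t = x0) (top_of_set unit_cube) X \<alpha> \<beta>"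

definition pi_n :: "'a topology \<Rightarrow> 'a \<Rightarrow> ((real^'n) \<Rightarrow> 'a) set set" where
  "pi_n X x0 = Omega X x0 // {(\<alpha>, \<beta>). \<alpha> \<in> Omega X x0 \<and> \<beta> \<in> Omega X x0 \<and> rel_homotopic X x0 \<alpha> \<beta>}"

definition unif_dist :: "('a \<Rightarrow> 'a \<Rightarrow> real) \<Rightarrow> ((real^'n) \<Rightarrow> 'a) \<Rightarrow> ((real^'n) \<Rightarrow> 'a) \<Rightarrow> real" where
  "unif_dist d \<alpha> \<beta> = (SUP t\<in>unit_cube. d (\<alpha> t) (\<beta> t))"

definition rho :: "('a \<Rightarrow> 'a \<Rightarrow> real) \<Rightarrow> ((real^'n) \<Rightarrow> 'a) set \<Rightarrow> ((real^'n) \<Rightarrow> 'a) set \<Rightarrow> real" where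
  "rho d a b = (INF p\<in>a \<times> b. unif_dist d (fst p) (snd p))"

definition pi_n_topology :: "'a topology \<Rightarrow> 'a \<Rightarrow> ('a \<Rightarrow> 'a \<Rightarrow> real) \<Rightarrow> ((real^'n) \<Rightarrow> 'a) set topology" where
  "pi_n_topology X x0 d =
     topology_generated_by {{b \<in> pi_n X x0. rho d a b < r} | a r. a \<in> pi_n X x0 \<and> r > 0}"

end

theory Submission
  imports Defs
begin


definition cl :: "real^'n \<Rightarrow> real^'n" where "cl t = (\<chi> i. max 0 (min 1 (t$i)))"

lemma cl_in: "cl t \<in> unit_cube"
  by (auto simp: cl_def unit_cube_def mem_box_cart)

lemma cl_id: "t \<in> unit_cube \<Longrightarrow> cl t = t"
  by (auto simp: cl_def unit_cube_def mem_box_cart vec_eq_iff)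

lemma cl_notbox: "t \<notin> box 0 1 \<Longrightarrow> cl t \<notin> box 0 (1::real^'n)"
proof -
  assume "t \<notin> box 0 1"
  then obtain i where "\<not> (0 < t$i \<and> t$i < 1)" by (metis mem_box_cart(1) zero_index one_index)
  then have "\<not> (0 < cl t$i \<and> cl t$i < 1)" by (simp add: cl_def max_def min_def)
  then show ?thesis by (metis mem_box_cart(1) zero_index one_index)
qed

lemma cl_cont: "continuous_on UNIV cl"
  unfolding cl_def by (intro continuous_intros)

lemma frontier_cube: "frontier unit_cube = unit_cube - box 0 1"
  by (simp add: unit_cube_def frontier_cbox)

lemma omega_off: "\<phi> \<in> Omega X x0 \<Longrightarrow> t \<notin> box 0 1 \<Longrightarrow> \<phi> t = x0"
  unfolding Omega_def frontier_cube by auto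

lemma omega_cl: "\<phi> \<in> Omega X x0 \<Longrightarrow> \<phi> (cl t) = \<phi> t"
proof (cases "t \<in> unit_cube")
  case True then show ?thesis by (simp add: cl_id)
next
  case False
  assume a: "\<phi> \<in> Omega X x0"
  have "t \<notin> box 0 1" using False box_subset_cbox unfolding unit_cube_def by blast
  then show ?thesis using omega_off[OF a] cl_notbox by metis
qed

lemma cl_map: "continuous_map euclidean (top_of_set unit_cube) cl"
  by (simp add: continuous_map_into_subtopology cl_cont cl_in image_subset_iff)

lemma omega_cont: "\<phi> \<in> Omega X x0 \<Longrightarrow> continuous_map euclidean X \<phi>"
proof -
  assume a: "\<phi> \<in> Omega X x0"
  have "continuous_map euclidean X (\<phi> \<circ> cl)"
    using a by (intro continuous_map_compose[OF cl_map]) (auto simp: Omega_def)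
  moreover have "\<phi> \<circ> cl = \<phi>" using omega_cl[OF a] by auto
  ultimately show ?thesis by simp
qed

lemma omega_intro: "continuous_map euclidean X \<phi> \<Longrightarrow> (\<And>t. t \<notin> box 0 1 \<Longrightarrow> \<phi> t = x0) \<Longrightarrow> \<phi> \<in> Omega X x0"
  unfolding Omega_def frontier_cube
  using box_subset_cbox[of "0::real^'n" 1]
  by (auto intro: continuous_map_from_subtopology simp: unit_cube_def)

lemma hom_intro:
  fixes H :: "real \<times> (real^'n) \<Rightarrow> 'a"
  assumes "continuous_map euclidean X H" "\<And>t. H(0,t) = f t" "\<And>t. H(1,t) = g t"
    "\<And>s t. s \<in> {0..1} \<Longrightarrow> t \<notin> box 0 1 \<Longrightarrow> H(s,t) = x0"
  shows "rel_homotopic X x0 f g"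
  unfolding rel_homotopic_def homotopic_with_def
proof (intro exI conjI)
  show "continuous_map (prod_topology (top_of_set {0..1}) (top_of_set unit_cube)) X H"
    using assms(1) by (simp add: continuous_map_from_subtopology)
  show "\<forall>x. H (0, x) = f x" "\<forall>x. H (1, x) = g x" using assms(2,3) by auto
  show "\<forall>s\<in>{0..1}. \<forall>t\<in>frontier unit_cube. H (s, t) = x0"
    using assms(4) unfolding frontier_cube by blast
qed

lemma hom_elim:
  assumes "rel_homotopic X x0 f g" "f \<in> Omega X x0" "g \<in> Omega X x0"
  shows "\<exists>H. continuous_map euclidean X H \<and> (\<forall>t. H(0::real,t) = f t) \<and> (\<forall>t. H(1,t) = g t)
     \<and> (\<forall>s t. t \<notin> box 0 (1::real^'n) \<longrightarrow> H(s,t) = x0)"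
proof -
  obtain h :: "real \<times> (real^'n) \<Rightarrow> 'a" where h: "continuous_map (prod_topology (top_of_set {0..1}) (top_of_set unit_cube)) X h"
    "\<And>x. h(0,x) = f x" "\<And>x. h(1,x) = g x" "\<And>s. s\<in>{0..1} \<Longrightarrow> \<forall>t\<in>frontier unit_cube. h(s,t) = x0"
    using assms(1) unfolding rel_homotopic_def homotopic_with_def by blast
  define c where "c = (\<lambda>s::real. max 0 (min 1 s))"
  have cc: "continuous_on UNIV c" unfolding c_def by (intro continuous_intros)
  have c01: "c s \<in> {0..1}" for s by (auto simp: c_def)
  have m: "continuous_map euclidean (prod_topology (top_of_set {0..1}) (top_of_set unit_cube))
        (\<lambda>p. (c (fst p), cl (snd p)))"
  proof (intro continuous_map_pairedI)
    show "continuous_map euclidean (top_of_set {0..1}) (\<lambda>x. c (fst x))"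
      using c01 by (intro continuous_map_into_subtopology) (auto intro!: continuous_intros continuous_on_compose2[OF cc])
    show "continuous_map euclidean (top_of_set unit_cube) (\<lambda>x. cl (snd x))"
      using cl_in by (intro continuous_map_into_subtopology) (auto intro!: continuous_intros continuous_on_compose2[OF cl_cont])
  qed
  define H where "H = (\<lambda>p. h (c (fst p), cl (snd p)))"
  have 1: "continuous_map euclidean X H"
    using continuous_map_compose[OF m h(1)] by (simp add: o_def H_def)
  have 2: "\<forall>t. H(0,t) = f t"
    using h(2) omega_cl[OF assms(2)] by (simp add: c_def H_def)
  have 3: "\<forall>t. H(1,t) = g t"
    using h(3) omega_cl[OF assms(3)] by (simp add: c_def H_def)
  have 4: "\<forall>s t. t \<notin> box 0 1 \<longrightarrow> H(s,t) = x0"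
  proof (intro allI impI)
    fix s t assume t: "t \<notin> box (0::real^'n) 1"
    have "cl t \<in> frontier unit_cube" using cl_in[of t] cl_notbox[OF t] frontier_cube by auto
    then show "H(s,t) = x0" using h(4)[OF c01] by (simp add: H_def)
  qed
  show ?thesis using 1 2 3 4 by blast
qed



definition k0 :: 'n where "k0 = undefined"

definition upd :: "real^'n \<Rightarrow> real \<Rightarrow> real^'n" where
  "upd t v = (\<chi> i. if i = k0 then v else t$i)"

lemma upd_nth: "upd t v $ i = (if i = k0 then v else t$i)"
  by (simp add: upd_def)

lemma upd_upd[simp]: "upd (upd t v) w = upd t w"
  by (simp add: upd_def vec_eq_iff)

lemma upd_self[simp]: "upd t (t$k0) = t"
  by (simp add: upd_def vec_eq_iff)

lemma upd_k0[simp]: "upd t v $ k0 = v"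
  by (simp add: upd_def)

definition ob :: "real^'n \<Rightarrow> bool" where
  "ob t \<longleftrightarrow> (\<exists>i. i \<noteq> k0 \<and> \<not> (0 < t$i \<and> t$i < 1))"

lemma ob_upd[simp]: "ob (upd t v) = ob t"
  unfolding ob_def upd_nth by auto

lemma all_split: "(\<forall>i. P i) \<longleftrightarrow> P k \<and> \<not> (\<exists>i. i \<noteq> k \<and> \<not> P i)"
  by auto

lemma box_iff: "t \<in> box 0 (1::real^'n) \<longleftrightarrow> 0 < t$k0 \<and> t$k0 < 1 \<and> \<not> ob t"
  unfolding ob_def mem_box_cart zero_index one_index
  using all_split[where P="\<lambda>i. 0 < t$i \<and> t$i < 1" and k=k0] by simp

lemma upd_cont[continuous_intros]:
  "continuous_on S f \<Longrightarrow> continuous_on S g \<Longrightarrow> continuous_on S (\<lambda>x. upd (f x) (g x))"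
  unfolding upd_def
proof (intro continuous_on_vec_lambda)
  fix i assume "continuous_on S f" "continuous_on S g"
  then show "continuous_on S (\<lambda>x. if i = k0 then g x else f x $ i)"
    by (cases "i = k0") (auto intro: continuous_intros)
qed

lemma cm_comp: "continuous_map euclidean X \<phi> \<Longrightarrow> continuous_on UNIV g \<Longrightarrow> continuous_map euclidean X (\<lambda>x. \<phi> (g x))"
  using continuous_map_compose[of euclidean euclidean g X \<phi>] by (simp add: o_def)

lemma omega_ob: "\<phi> \<in> Omega X x0 \<Longrightarrow> ob t \<or> t$k0 \<le> 0 \<or> t$k0 \<ge> 1 \<Longrightarrow> \<phi> t = x0"
  using omega_off box_iff by (metis not_less)

definition C :: "(real^'n \<Rightarrow> 'a) \<Rightarrow> (real^'n \<Rightarrow> 'a) \<Rightarrow> (real^'n \<Rightarrow> 'a) \<Rightarrow> real^'n \<Rightarrow> 'a" where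
  "C f g h t = (if t$k0 \<le> 1/3 then f (upd t (3 * t$k0))
      else if t$k0 \<le> 2/3 then g (upd t (2 - 3 * t$k0)) else h (upd t (3 * t$k0 - 2)))"

lemma C_cont:
  fixes F G K :: "real \<times> (real^'n) \<Rightarrow> 'a"
  assumes F: "continuous_map euclidean X F" and G: "continuous_map euclidean X G"
    and K: "continuous_map euclidean X K"
    and FG: "\<And>s t. F(s, upd t 1) = G(s, upd t 1)" and GK: "\<And>s t. G(s, upd t 0) = K(s, upd t 0)"
  shows "continuous_map euclidean X (\<lambda>p. C (\<lambda>t. F(fst p, t)) (\<lambda>t. G(fst p,t)) (\<lambda>t. K(fst p,t)) (snd p))"
proof -
  have u: "continuous_map euclidean euclideanreal (\<lambda>p::real \<times> (real^'n). snd p $ k0)"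
    by (simp add: continuous_intros)
  have f: "continuous_map euclidean X (\<lambda>p::real \<times> (real^'n). F(fst p, upd (snd p) (3 * snd p $ k0)))"
    by (rule cm_comp[OF F]) (intro continuous_intros)
  have g: "continuous_map euclidean X (\<lambda>p::real \<times> (real^'n). G(fst p, upd (snd p) (2 - 3 * snd p $ k0)))"
    by (rule cm_comp[OF G]) (intro continuous_intros)
  have k: "continuous_map euclidean X (\<lambda>p::real \<times> (real^'n). K(fst p, upd (snd p) (3 * snd p $ k0 - 2)))"
    by (rule cm_comp[OF K]) (intro continuous_intros)
  have gk: "continuous_map euclidean X (\<lambda>p::real \<times> (real^'n). if snd p $ k0 \<le> 2/3 then G(fst p, upd (snd p) (2 - 3 * snd p $ k0))
       else K(fst p, upd (snd p) (3 * snd p $ k0 - 2)))"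
  proof (rule continuous_map_cases_le[OF u])
    show "continuous_map euclidean euclideanreal (\<lambda>x. 2 / 3)" by simp
    show "continuous_map (subtopology euclidean {x \<in> topspace euclidean. snd x $ k0 \<le> 2 / 3}) X
     (\<lambda>p. G (fst p, upd (snd p) (2 - 3 * snd p $ k0)))"
      using g by (rule continuous_map_from_subtopology)
    show "continuous_map (subtopology euclidean {x \<in> topspace euclidean. 2 / 3 \<le> snd x $ k0}) X
     (\<lambda>p. K (fst p, upd (snd p) (3 * snd p $ k0 - 2)))"
      using k by (rule continuous_map_from_subtopology)
    fix p :: "real \<times> (real^'n)" assume "snd p $ k0 = 2/3"
    then have "2 - 3 * snd p $ k0 = 0" "3 * snd p $ k0 - 2 = 0" by simp_all
    then show "G (fst p, upd (snd p) (2 - 3 * snd p $ k0)) = K (fst p, upd (snd p) (3 * snd p $ k0 - 2))"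
      using GK by simp
  qed
  have "continuous_map euclidean X (\<lambda>p::real \<times> (real^'n). if snd p $ k0 \<le> 1/3 then F(fst p, upd (snd p) (3 * snd p $ k0)) else
       (if snd p $ k0 \<le> 2/3 then G(fst p, upd (snd p) (2 - 3 * snd p $ k0))
       else K(fst p, upd (snd p) (3 * snd p $ k0 - 2))))"
  proof (rule continuous_map_cases_le[OF u])
    show "continuous_map euclidean euclideanreal (\<lambda>x. 1 / 3)" by simp
    show "continuous_map (subtopology euclidean {x \<in> topspace euclidean. snd x $ k0 \<le> 1 / 3}) X
     (\<lambda>p. F (fst p, upd (snd p) (3 * snd p $ k0)))"
      using f by (rule continuous_map_from_subtopology)
    show "continuous_map (subtopology euclidean {x \<in> topspace euclidean. 1 / 3 \<le> snd x $ k0}) X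
     (\<lambda>p. if snd p $ k0 \<le> 2/3 then G(fst p, upd (snd p) (2 - 3 * snd p $ k0))
       else K(fst p, upd (snd p) (3 * snd p $ k0 - 2)))"
      using gk by (rule continuous_map_from_subtopology)
    fix p :: "real \<times> (real^'n)" assume "snd p $ k0 = 1/3"
    then have "3 * snd p $ k0 = 1" "2 - 3 * snd p $ k0 = 1" by simp_all
    then show "F (fst p, upd (snd p) (3 * snd p $ k0)) = (if snd p $ k0 \<le> 2/3 then G(fst p, upd (snd p) (2 - 3 * snd p $ k0))
       else K(fst p, upd (snd p) (3 * snd p $ k0 - 2)))"
      using FG by simp
  qed
  then show ?thesis by (simp add: C_def)
qed

lemma C_off:
  assumes "\<And>x. ob x \<or> x$k0 \<le> 0 \<Longrightarrow> f x = x0" "\<And>x. ob x \<Longrightarrow> g x = x0"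
    "\<And>x. ob x \<or> x$k0 \<ge> 1 \<Longrightarrow> h x = x0" "t \<notin> box 0 1"
  shows "C f g h t = x0"
proof -
  have "ob t \<or> t$k0 \<le> 0 \<or> t$k0 \<ge> 1" using assms(4) box_iff by (metis not_less)
  then consider "ob t" | "t$k0 \<le> 0" | "t$k0 \<ge> 1" by blast
  then show ?thesis
  proof cases
    case 1
    then show ?thesis unfolding C_def using assms(1)[of "upd t (3 * t$k0)"]
      assms(2)[of "upd t (2 - 3 * t$k0)"] assms(3)[of "upd t (3 * t$k0 - 2)"] by simp
  next
    case 2
    then show ?thesis unfolding C_def using assms(1)[of "upd t (3 * t$k0)"] by simp
  next
    case 3
    then show ?thesis unfolding C_def using assms(3)[of "upd t (3 * t$k0 - 2)"] by simp
  qed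
qed

lemma C_in:
  fixes f g h :: "real^'n \<Rightarrow> 'a"
  assumes "f \<in> Omega X x0" "g \<in> Omega X x0" "h \<in> Omega X x0"
  shows "C f g h \<in> Omega X x0"
proof (rule omega_intro)
  have cf: "continuous_map euclidean X (\<lambda>p::real \<times> (real^'n). f (snd p))"
    by (rule cm_comp[OF omega_cont[OF assms(1)]]) (intro continuous_intros)
  have cg: "continuous_map euclidean X (\<lambda>p::real \<times> (real^'n). g (snd p))"
    by (rule cm_comp[OF omega_cont[OF assms(2)]]) (intro continuous_intros)
  have ch: "continuous_map euclidean X (\<lambda>p::real \<times> (real^'n). h (snd p))"
    by (rule cm_comp[OF omega_cont[OF assms(3)]]) (intro continuous_intros)
  have e1: "f (upd t 1) = g (upd t 1)" for t
    using omega_ob[OF assms(1), of "upd t 1"] omega_ob[OF assms(2), of "upd t 1"] by simp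
  have e2: "g (upd t 0) = h (upd t 0)" for t
    using omega_ob[OF assms(2), of "upd t 0"] omega_ob[OF assms(3), of "upd t 0"] by simp
  have "continuous_map euclidean X (\<lambda>p::real \<times> (real^'n). C (\<lambda>t. f (snd (fst p, t))) (\<lambda>t. g (snd (fst p, t))) (\<lambda>t. h (snd (fst p, t))) (snd p))"
    by (rule C_cont[OF cf cg ch]) (simp_all only: snd_conv e1 e2)
  then have "continuous_map euclidean X (\<lambda>p::real \<times> (real^'n). C f g h (snd p))"
    by (simp only: snd_conv)
  then have "continuous_map euclidean X (\<lambda>t. (\<lambda>p::real \<times> (real^'n). C f g h (snd p)) (0::real, t))"
    by (rule cm_comp) (intro continuous_intros)
  then show "continuous_map euclidean X (C f g h)" by simp
  show "C f g h t = x0" if "t \<notin> box 0 1" for t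
  proof (rule C_off[OF _ _ _ that])
    show "f x = x0" if "ob x \<or> x $ k0 \<le> 0" for x using omega_ob[OF assms(1)] that by blast
    show "g x = x0" if "ob x" for x using omega_ob[OF assms(2)] that by blast
    show "h x = x0" if "ob x \<or> x $ k0 \<ge> 1" for x using omega_ob[OF assms(3)] that by blast
  qed
qed



lemma rh_trans: "rel_homotopic X x0 f g \<Longrightarrow> rel_homotopic X x0 g h \<Longrightarrow> rel_homotopic X x0 f h"
  unfolding rel_homotopic_def by (rule homotopic_with_trans)

lemma rh_sym: "rel_homotopic X x0 f g \<Longrightarrow> rel_homotopic X x0 g f"
  unfolding rel_homotopic_def by (rule homotopic_with_symD)

lemma cm_snd: "\<phi> \<in> Omega X x0 \<Longrightarrow> continuous_map euclidean X (\<lambda>p::real \<times> (real^'n). \<phi> (snd p))"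
proof -
  assume a: "\<phi> \<in> Omega X x0"
  have "continuous_on UNIV (\<lambda>p::real \<times> (real^'n). snd p)"
    using continuous_on_snd[OF continuous_on_id[of UNIV]] by simp
  then show ?thesis by (rule cm_comp[OF omega_cont[OF a]])
qed

lemma Cong3:
  fixes f g h h' :: "real^'n \<Rightarrow> 'a"
  assumes f: "f \<in> Omega X x0" and g: "g \<in> Omega X x0" and h: "h \<in> Omega X x0" and h': "h' \<in> Omega X x0"
    and r: "rel_homotopic X x0 h' h"
  shows "rel_homotopic X x0 (C f g h') (C f g h)"
proof -
  obtain K :: "real \<times> (real^'n) \<Rightarrow> 'a" where K: "continuous_map euclidean X K" "\<forall>t. K(0,t) = h' t"
    "\<forall>t. K(1,t) = h t" "\<forall>s t. t \<notin> box 0 1 \<longrightarrow> K(s,t) = x0"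
    using hom_elim[OF r h' h] by blast
  have Kob: "K(s,t) = x0" if "ob t \<or> t$k0 \<le> 0 \<or> t$k0 \<ge> 1" for s t
    using K(4) that box_iff by (metis not_less)
  have "continuous_map euclidean X (\<lambda>p::real \<times> (real^'n). C (\<lambda>t. f (snd (fst p, t))) (\<lambda>t. g (snd (fst p, t))) (\<lambda>t. K (fst p, t)) (snd p))"
  proof (rule C_cont[OF cm_snd[OF f] cm_snd[OF g] K(1)])
    show "f (snd (s, upd t 1)) = g (snd (s, upd t 1))" for s t
      using omega_ob[OF f, of "upd t 1"] omega_ob[OF g, of "upd t 1"] by simp
    show "g (snd (s, upd t 0)) = K (s, upd t 0)" for s t
      using omega_ob[OF g, of "upd t 0"] Kob[of "upd t 0" s] by simp
  qed
  then have c: "continuous_map euclidean X (\<lambda>p::real \<times> (real^'n). C f g (\<lambda>t. K (fst p, t)) (snd p))"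
    by (simp only: snd_conv)
  have e0: "(\<lambda>t. K (0, t)) = h'" and e1: "(\<lambda>t. K (1, t)) = h" using K(2,3) by auto
  show ?thesis
  proof (rule hom_intro[OF c], goal_cases)
    case (1 t) then show ?case using e0 by simp
  next
    case (2 t) then show ?case using e1 by simp
  next
    case (3 s t)
    have "C f g (\<lambda>t. K (s, t)) t = x0"
    proof (rule C_off[OF _ _ _ 3(2)])
      show "f x = x0" if "ob x \<or> x $ k0 \<le> 0" for x using omega_ob[OF f] that by blast
      show "g x = x0" if "ob x" for x using omega_ob[OF g] that by blast
      show "K (s, x) = x0" if "ob x \<or> x $ k0 \<ge> 1" for x using Kob that by blast
    qed
    then show ?case by simp
  qed
qed

lemma FoldB:
  fixes f g :: "real^'n \<Rightarrow> 'a"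
  assumes f: "f \<in> Omega X x0" and g: "g \<in> Omega X x0"
  shows "rel_homotopic X x0 (C f g g) (C f (\<lambda>_. x0) (\<lambda>_. x0))"
proof -
  define G where "G = (\<lambda>p::real \<times> (real^'n). g (upd (snd p) (max (snd p $ k0) (fst p))))"
  have cG: "continuous_map euclidean X G"
    unfolding G_def by (rule cm_comp[OF omega_cont[OF g]]) (intro continuous_intros)
  have "continuous_map euclidean X (\<lambda>p::real \<times> (real^'n). C (\<lambda>t. f (snd (fst p, t))) (\<lambda>t. G (fst p, t)) (\<lambda>t. G (fst p, t)) (snd p))"
  proof (rule C_cont[OF cm_snd[OF f] cG cG])
    show "f (snd (s, upd t 1)) = G (s, upd t 1)" for s t
      using omega_ob[OF f, of "upd t 1"] omega_ob[OF g, of "upd t (max 1 s)"] by (simp add: G_def)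
  qed simp
  then have c: "continuous_map euclidean X (\<lambda>p::real \<times> (real^'n). C f (\<lambda>t. G (fst p, t)) (\<lambda>t. G (fst p, t)) (snd p))"
    by (simp only: snd_conv)
  have e0: "(\<lambda>t. G (0, t)) = g"
  proof
    fix t
    show "G (0, t) = g t"
    proof (cases "t$k0 \<ge> 0")
      case True then have "max (t$k0) 0 = t$k0" by simp
      then show ?thesis by (simp add: G_def)
    next
      case False then show ?thesis using omega_ob[OF g, of t] omega_ob[OF g, of "upd t 0"]
        by (simp add: G_def max_def)
    qed
  qed
  have e1: "(\<lambda>t. G (1, t)) = (\<lambda>_. x0)"
    using omega_ob[OF g] by (auto simp: G_def)
  show ?thesis
  proof (rule hom_intro[OF c], goal_cases)
    case (1 t) then show ?case using e0 by simp
  next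
    case (2 t) then show ?case using e1 by simp
  next
    case (3 s t)
    have "C f (\<lambda>t. G (s, t)) (\<lambda>t. G (s, t)) t = x0"
    proof (rule C_off[OF _ _ _ 3(2)])
      show "f x = x0" if "ob x \<or> x $ k0 \<le> 0" for x using omega_ob[OF f] that by blast
      show "G (s, x) = x0" if "ob x" for x using omega_ob[OF g] that by (simp add: G_def)
      show "G (s, x) = x0" if "ob x \<or> x $ k0 \<ge> 1" for x
        using omega_ob[OF g, of "upd x (max (x $ k0) s)"] that by (auto simp: G_def le_max_iff_disj min_le_iff_disj)
    qed
    then show ?case by simp
  qed
qed

lemma FoldC:
  fixes f g :: "real^'n \<Rightarrow> 'a"
  assumes f: "f \<in> Omega X x0" and g: "g \<in> Omega X x0"
  shows "rel_homotopic X x0 (C g g f) (C (\<lambda>_. x0) (\<lambda>_. x0) f)"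
proof -
  define G where "G = (\<lambda>p::real \<times> (real^'n). g (upd (snd p) (min (snd p $ k0) (1 - fst p))))"
  have cG: "continuous_map euclidean X G"
    unfolding G_def by (rule cm_comp[OF omega_cont[OF g]]) (intro continuous_intros)
  have "continuous_map euclidean X (\<lambda>p::real \<times> (real^'n). C (\<lambda>t. G (fst p, t)) (\<lambda>t. G (fst p, t)) (\<lambda>t. f (snd (fst p, t))) (snd p))"
  proof (rule C_cont[OF cG cG cm_snd[OF f]])
    show "G (s, upd t 0) = f (snd (s, upd t 0))" for s t
      using omega_ob[OF f, of "upd t 0"] omega_ob[OF g, of "upd t (min 0 (1 - s))"] by (simp add: G_def)
  qed simp
  then have c: "continuous_map euclidean X (\<lambda>p::real \<times> (real^'n). C (\<lambda>t. G (fst p, t)) (\<lambda>t. G (fst p, t)) f (snd p))"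
    by (simp only: snd_conv)
  have e0: "(\<lambda>t. G (0, t)) = g"
  proof
    fix t
    show "G (0, t) = g t"
    proof (cases "t$k0 \<le> 1")
      case True then have "min (t$k0) (1 - 0) = t$k0" by simp
      then show ?thesis by (simp add: G_def)
    next
      case False then show ?thesis using omega_ob[OF g, of t] omega_ob[OF g, of "upd t 1"]
        by (simp add: G_def min_def)
    qed
  qed
  have e1: "(\<lambda>t. G (1, t)) = (\<lambda>_. x0)"
    using omega_ob[OF g] by (auto simp: G_def)
  show ?thesis
  proof (rule hom_intro[OF c], goal_cases)
    case (1 t) then show ?case using e0 by simp
  next
    case (2 t) then show ?case using e1 by simp
  next
    case (3 s t)
    have "C (\<lambda>t. G (s, t)) (\<lambda>t. G (s, t)) f t = x0"
    proof (rule C_off[OF _ _ _ 3(2)])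
      show "G (s, x) = x0" if "ob x \<or> x $ k0 \<le> 0" for x
        using omega_ob[OF g, of "upd x (min (x $ k0) (1 - s))"] that by (auto simp: G_def le_max_iff_disj min_le_iff_disj)
      show "G (s, x) = x0" if "ob x" for x using omega_ob[OF g] that by (simp add: G_def)
      show "f x = x0" if "ob x \<or> x $ k0 \<ge> 1" for x using omega_ob[OF f] that by blast
    qed
    then show ?case by simp
  qed
qed



lemma ReB:
  fixes f :: "real^'n \<Rightarrow> 'a"
  assumes f: "f \<in> Omega X x0"
  shows "rel_homotopic X x0 (C f (\<lambda>_. x0) (\<lambda>_. x0)) f"
proof -
  define H where "H = (\<lambda>p::real \<times> (real^'n). f (upd (snd p) ((3 - 2 * fst p) * (snd p $ k0))))"
  have c: "continuous_map euclidean X H"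
    unfolding H_def by (rule cm_comp[OF omega_cont[OF f]]) (intro continuous_intros)
  show ?thesis
  proof (rule hom_intro[OF c], goal_cases)
    case (1 t)
    show ?case
    proof (cases "t$k0 \<le> 1/3")
      case True then show ?thesis by (simp add: H_def C_def)
    next
      case False then show ?thesis using omega_ob[OF f, of "upd t (3 * t$k0)"] by (simp add: H_def C_def)
    qed
  next
    case (2 t) then show ?case by (simp add: H_def)
  next
    case (3 s t)
    have "ob t \<or> t$k0 \<le> 0 \<or> t$k0 \<ge> 1" using 3(2) box_iff by (metis not_less)
    moreover have "t$k0 \<le> 0 \<Longrightarrow> (3 - 2 * s) * (t $ k0) \<le> 0" using 3(1)
      by (simp add: mult_nonneg_nonpos)
    moreover have "t$k0 \<ge> 1 \<Longrightarrow> (3 - 2 * s) * (t $ k0) \<ge> 1" using 3(1)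
      using mult_mono[of 1 "3 - 2 * s" 1 "t $ k0"] by simp
    ultimately show ?case using omega_ob[OF f, of "upd t ((3 - 2 * s) * (t $ k0))"]
      by (auto simp: H_def)
  qed
qed

lemma ReC:
  fixes f :: "real^'n \<Rightarrow> 'a"
  assumes f: "f \<in> Omega X x0"
  shows "rel_homotopic X x0 (C (\<lambda>_. x0) (\<lambda>_. x0) f) f"
proof -
  define H where "H = (\<lambda>p::real \<times> (real^'n). f (upd (snd p) ((3 - 2 * fst p) * (snd p $ k0) - 2 * (1 - fst p))))"
  have c: "continuous_map euclidean X H"
    unfolding H_def by (rule cm_comp[OF omega_cont[OF f]]) (intro continuous_intros)
  show ?thesis
  proof (rule hom_intro[OF c], goal_cases)
    case (1 t)
    show ?case
    proof (cases "t$k0 \<le> 2/3")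
      case True then show ?thesis using omega_ob[OF f, of "upd t (3 * t$k0 - 2)"] by (simp add: H_def C_def)
    next
      case False then show ?thesis by (simp add: H_def C_def)
    qed
  next
    case (2 t) then show ?case by (simp add: H_def)
  next
    case (3 s t)
    have "ob t \<or> t$k0 \<le> 0 \<or> t$k0 \<ge> 1" using 3(2) box_iff by (metis not_less)
    moreover have "t$k0 \<le> 0 \<Longrightarrow> (3 - 2 * s) * (t $ k0) - 2 * (1 - s) \<le> 0" using 3(1)
      using mult_nonneg_nonpos[of "3 - 2 * s" "t $ k0"] by simp
    moreover have "(3 - 2 * s) * (t $ k0) - 2 * (1 - s) \<ge> 1" if "t$k0 \<ge> 1"
    proof -
      have "(3 - 2 * s) * 1 \<le> (3 - 2 * s) * (t $ k0)" using 3(1) that by (intro mult_left_mono) auto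
      then show ?thesis by simp
    qed
    ultimately show ?case using omega_ob[OF f, of "upd t ((3 - 2 * s) * (t $ k0) - 2 * (1 - s))"]
      by (auto simp: H_def)
  qed
qed

lemma C_B: "f \<in> Omega X x0 \<Longrightarrow> g \<in> Omega X x0 \<Longrightarrow> rel_homotopic X x0 (C f g g) f"
  by (metis FoldB ReB rh_trans)

lemma C_C: "f \<in> Omega X x0 \<Longrightarrow> g \<in> Omega X x0 \<Longrightarrow> rel_homotopic X x0 (C g g f) f"
  by (metis FoldC ReC rh_trans)



lemma pi_class:
  assumes "a \<in> pi_n X x0"
  shows "\<exists>\<alpha>0\<in>Omega X x0. a = {\<beta>. \<beta> \<in> Omega X x0 \<and> rel_homotopic X x0 \<alpha>0 \<beta>}"
proof -
  obtain \<alpha>0 where "\<alpha>0 \<in> Omega X x0"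
    and a: "a = {(\<alpha>, \<beta>). \<alpha> \<in> Omega X x0 \<and> \<beta> \<in> Omega X x0 \<and> rel_homotopic X x0 \<alpha> \<beta>} `` {\<alpha>0}"
    using assms unfolding pi_n_def by (rule quotientE)
  moreover have "a = {\<beta>. \<beta> \<in> Omega X x0 \<and> rel_homotopic X x0 \<alpha>0 \<beta>}"
    unfolding a using \<open>\<alpha>0 \<in> Omega X x0\<close> by (simp add: Image_singleton)
  ultimately show ?thesis by blast
qed

lemma class_ne: "a \<in> pi_n X x0 \<Longrightarrow> a \<noteq> {}"
proof -
  assume a0: "a \<in> pi_n X x0"
  obtain \<alpha>0 where o: "\<alpha>0 \<in> Omega X x0" and a: "a = {\<beta>. \<beta> \<in> Omega X x0 \<and> rel_homotopic X x0 \<alpha>0 \<beta>}"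
    using pi_class[OF a0] by blast
  have "rel_homotopic X x0 \<alpha>0 \<alpha>0"
    unfolding rel_homotopic_def
  proof (rule homotopic_with_refl[THEN iffD2], rule conjI)
    show "continuous_map (top_of_set unit_cube) X \<alpha>0" using o unfolding Omega_def by blast
    show "\<forall>t\<in>frontier unit_cube. \<alpha>0 t = x0" using o unfolding Omega_def by blast
  qed
  then have "\<alpha>0 \<in> a" using o unfolding a by simp
  then show ?thesis by blast
qed

lemma class_sub: "a \<in> pi_n X x0 \<Longrightarrow> \<alpha> \<in> a \<Longrightarrow> \<alpha> \<in> Omega X x0"
  using pi_class[of a X x0] by blast

lemma class_closed: "a \<in> pi_n X x0 \<Longrightarrow> \<alpha> \<in> a \<Longrightarrow> \<beta> \<in> Omega X x0 \<Longrightarrow> rel_homotopic X x0 \<beta> \<alpha> \<Longrightarrow> \<beta> \<in> a"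
proof -
  assume "a \<in> pi_n X x0" "\<alpha> \<in> a" "\<beta> \<in> Omega X x0" "rel_homotopic X x0 \<beta> \<alpha>"
  moreover obtain \<alpha>0 where "a = {\<beta>. \<beta> \<in> Omega X x0 \<and> rel_homotopic X x0 \<alpha>0 \<beta>}"
    using pi_class[OF \<open>a \<in> pi_n X x0\<close>] by blast
  ultimately have "rel_homotopic X x0 \<alpha>0 \<alpha>" "\<beta> \<in> Omega X x0" "rel_homotopic X x0 \<beta> \<alpha>"
    "a = {\<beta>. \<beta> \<in> Omega X x0 \<and> rel_homotopic X x0 \<alpha>0 \<beta>}" by simp_all
  then show ?thesis using rh_trans[OF _ rh_sym, of X x0 \<alpha>0 \<alpha> \<beta>] by simp
qed

lemma class_hom: "a \<in> pi_n X x0 \<Longrightarrow> \<alpha> \<in> a \<Longrightarrow> \<beta> \<in> a \<Longrightarrow> rel_homotopic X x0 \<alpha> \<beta>"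
proof -
  assume "a \<in> pi_n X x0" "\<alpha> \<in> a" "\<beta> \<in> a"
  moreover obtain \<alpha>0 where "a = {\<beta>. \<beta> \<in> Omega X x0 \<and> rel_homotopic X x0 \<alpha>0 \<beta>}"
    using pi_class[OF \<open>a \<in> pi_n X x0\<close>] by blast
  ultimately have "rel_homotopic X x0 \<alpha>0 \<alpha>" "rel_homotopic X x0 \<alpha>0 \<beta>" by simp_all
  then show ?thesis using rh_trans[OF rh_sym, of X x0 \<alpha>0 \<alpha> \<beta>] by simp
qed

lemma omega_top: "\<alpha> \<in> Omega X x0 \<Longrightarrow> \<alpha> t \<in> topspace X"
  using omega_cont[of \<alpha> X x0] continuous_map_image_subset_topspace[of euclidean X \<alpha>] by auto



locale pm =
  fixes X :: "'a topology" and x0 :: 'a and d :: "'a \<Rightarrow> 'a \<Rightarrow> real"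
  assumes ms: "Metric_space (topspace X) d" and mt: "Metric_space.mtopology (topspace X) d = X"
    and cpt: "compact_space X" and x0: "x0 \<in> topspace X"
begin

lemma d_nonneg: "0 \<le> d x y"
  using ms by (simp add: Metric_space.nonneg)

lemma d_self: "x \<in> topspace X \<Longrightarrow> d x x = 0"
  using ms by (simp add: Metric_space.zero)

lemma d_bound: "\<exists>B. \<forall>x\<in>topspace X. \<forall>y\<in>topspace X. d x y \<le> B"
proof -
  have "compactin (Metric_space.mtopology (topspace X) d) (topspace X)"
    using cpt mt by (simp add: compact_space_def)
  then have "Metric_space.mbounded (topspace X) d (topspace X)"
    using Metric_space.compactin_imp_mbounded[OF ms] by blast
  then have "topspace X \<subseteq> topspace X \<and> (\<exists>B. \<forall>x\<in>topspace X. \<forall>y\<in>topspace X. d x y \<le> B)"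
    by (rule Metric_space.mbounded_alt[OF ms, THEN iffD1])
  then show ?thesis by (rule conjunct2)
qed

lemma zero_cube: "(0::real^'n) \<in> unit_cube"
  by (simp add: unit_cube_def mem_box_cart)

lemma cube_ne: "unit_cube \<noteq> ({} :: (real^'n) set)"
  using zero_cube by blast

lemma ud_ge:
  fixes \<alpha> \<beta> :: "real^'n \<Rightarrow> 'a"
  assumes "\<alpha> \<in> Omega X x0" "\<beta> \<in> Omega X x0"
  shows "d (\<alpha> t) (\<beta> t) \<le> unif_dist d \<alpha> \<beta>"
proof -
  obtain B where B: "\<forall>x\<in>topspace X. \<forall>y\<in>topspace X. d x y \<le> B" using d_bound by blast
  have bdd: "bdd_above ((\<lambda>t. d (\<alpha> t) (\<beta> t)) ` unit_cube)"
  proof (rule bdd_aboveI2)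
    fix t show "d (\<alpha> t) (\<beta> t) \<le> B" using B omega_top[OF assms(1), of t] omega_top[OF assms(2), of t] by blast
  qed
  show ?thesis
  proof (cases "t \<in> unit_cube")
    case True then show ?thesis unfolding unif_dist_def using bdd by (rule cSUP_upper)
  next
    case False
    have "t \<notin> box 0 1"
    proof
      assume "t \<in> box 0 1"
      then have "t \<in> cbox 0 1" using box_subset_cbox[of "0::real^'n" 1] by (rule subsetD[rotated])
      then show False using False unfolding unit_cube_def by simp
    qed
    then have "\<alpha> t = x0" "\<beta> t = x0" using omega_off[OF assms(1)] omega_off[OF assms(2)] by simp_all
    then have "d (\<alpha> t) (\<beta> t) = 0" using d_self[OF x0] by simp
    also have "0 \<le> d (\<alpha> 0) (\<beta> 0)" by (rule d_nonneg)
    also have "\<dots> \<le> unif_dist d \<alpha> \<beta>" unfolding unif_dist_def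
      by (rule cSUP_upper[OF zero_cube bdd])
    finally show ?thesis .
  qed
qed

lemma ud_le:
  fixes \<alpha> \<beta> :: "real^'n \<Rightarrow> 'a"
  assumes "\<And>t. d (\<alpha> t) (\<beta> t) \<le> c"
  shows "unif_dist d \<alpha> \<beta> \<le> c"
  unfolding unif_dist_def using cube_ne assms by (intro cSUP_least) auto

lemma ud_nonneg:
  fixes \<alpha> \<beta> :: "real^'n \<Rightarrow> 'a"
  assumes "\<alpha> \<in> Omega X x0" "\<beta> \<in> Omega X x0"
  shows "0 \<le> unif_dist d \<alpha> \<beta>"
  using ud_ge[OF assms, of 0] d_nonneg[of "\<alpha> 0" "\<beta> 0"] by linarith

lemma bddb: 
  assumes "a \<in> pi_n X x0" "b \<in> pi_n X x0"
  shows "bdd_below ((\<lambda>p. unif_dist d (fst p) (snd p)) ` (a \<times> (b :: ((real^'n) \<Rightarrow> 'a) set)))"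
proof (rule bdd_belowI2[where m=0])
  fix x assume "x \<in> a \<times> b"
  then have "fst x \<in> Omega X x0" "snd x \<in> Omega X x0" using class_sub assms by auto
  then show "0 \<le> unif_dist d (fst x) (snd x)" by (rule ud_nonneg)
qed

lemma rho_lt:
  fixes a b :: "((real^'n) \<Rightarrow> 'a) set"
  assumes "a \<in> pi_n X x0" "b \<in> pi_n X x0" "rho d a b < r"
  shows "\<exists>\<alpha>\<in>a. \<exists>\<beta>\<in>b. unif_dist d \<alpha> \<beta> < r"
proof -
  have "a \<noteq> {}" "b \<noteq> {}" using class_ne[OF assms(1)] class_ne[OF assms(2)] by auto
  then have ne: "a \<times> b \<noteq> {}" by simp
  have "(INF p\<in>a \<times> b. unif_dist d (fst p) (snd p)) < r" using assms(3) unfolding rho_def .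
  then have "\<exists>p\<in>a \<times> b. unif_dist d (fst p) (snd p) < r"
    by (rule cINF_less_iff[OF ne bddb[OF assms(1,2)], THEN iffD1])
  then obtain p where p: "p \<in> a \<times> b" "unif_dist d (fst p) (snd p) < r" by (rule bexE)
  then have "fst p \<in> a" "snd p \<in> b" by (simp_all add: mem_Times_iff)
  then show ?thesis using p(2) by blast
qed

lemma rho_le:
  fixes a b :: "((real^'n) \<Rightarrow> 'a) set"
  assumes "a \<in> pi_n X x0" "b \<in> pi_n X x0" "\<alpha> \<in> a" "\<beta> \<in> b"
  shows "rho d a b \<le> unif_dist d \<alpha> \<beta>"
  unfolding rho_def using cINF_lower[OF bddb[OF assms(1,2)], of "(\<alpha>,\<beta>)"] assms(3,4) by simp

lemma rho_self:
  fixes b :: "((real^'n) \<Rightarrow> 'a) set"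
  assumes "b \<in> pi_n X x0"
  shows "rho d b b \<le> 0"
proof -
  obtain \<beta> where "\<beta> \<in> b" using class_ne[OF assms] by blast
  then have "rho d b b \<le> unif_dist d \<beta> \<beta>" using rho_le assms by blast
  also have "\<dots> \<le> 0"
  proof (rule ud_le)
    fix t show "d (\<beta> t) (\<beta> t) \<le> 0" using d_self[OF omega_top[OF class_sub[OF assms \<open>\<beta> \<in> b\<close>]]] by simp
  qed
  finally show ?thesis .
qed

lemma ultra:
  fixes a b c :: "((real^'n) \<Rightarrow> 'a) set"
  assumes a: "a \<in> pi_n X x0" and b: "b \<in> pi_n X x0" and c: "c \<in> pi_n X x0"
    and ab: "rho d a b < r" and bc: "rho d b c < r"
  shows "rho d a c < r"
proof -
  obtain \<alpha> \<beta> where \<alpha>: "\<alpha> \<in> a" and \<beta>: "\<beta> \<in> b" and m1: "unif_dist d \<alpha> \<beta> < r"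
    using rho_lt[OF a b ab] by blast
  obtain \<beta>' \<gamma> where \<beta>': "\<beta>' \<in> b" and \<gamma>: "\<gamma> \<in> c" and m2: "unif_dist d \<beta>' \<gamma> < r"
    using rho_lt[OF b c bc] by blast
  have oa: "\<alpha> \<in> Omega X x0" and ob: "\<beta> \<in> Omega X x0" and ob': "\<beta>' \<in> Omega X x0" and oc: "\<gamma> \<in> Omega X x0"
    using class_sub[OF a \<alpha>] class_sub[OF b \<beta>] class_sub[OF b \<beta>'] class_sub[OF c \<gamma>] by this+
  have h1: "rel_homotopic X x0 (C \<alpha> \<beta> \<beta>') \<alpha>"
    using rh_trans[OF Cong3[OF oa ob ob ob' class_hom[OF b \<beta>' \<beta>]] C_B[OF oa ob]] .
  have A: "C \<alpha> \<beta> \<beta>' \<in> a"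
    using class_closed[OF a \<alpha> C_in[OF oa ob ob'] h1] .
  have G: "C \<beta> \<beta> \<gamma> \<in> c"
    using class_closed[OF c \<gamma> C_in[OF ob ob oc] C_C[OF oc ob]] .
  have pw: "d (C \<alpha> \<beta> \<beta>' t) (C \<beta> \<beta> \<gamma> t) \<le> max (unif_dist d \<alpha> \<beta>) (unif_dist d \<beta>' \<gamma>)" for t
  proof -
    have "d (\<alpha> w) (\<beta> w) \<le> max (unif_dist d \<alpha> \<beta>) (unif_dist d \<beta>' \<gamma>)" for w
      using ud_ge[OF oa ob, of w] by linarith
    moreover have "d (\<beta>' w) (\<gamma> w) \<le> max (unif_dist d \<alpha> \<beta>) (unif_dist d \<beta>' \<gamma>)" for w
      using ud_ge[OF ob' oc, of w] by linarith
    moreover have "d (\<beta> w) (\<beta> w) \<le> max (unif_dist d \<alpha> \<beta>) (unif_dist d \<beta>' \<gamma>)" for w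
      using d_self[OF omega_top[OF ob]] ud_nonneg[OF oa ob] by simp
    ultimately show ?thesis unfolding C_def by (simp split: if_split)
  qed
  have "rho d a c \<le> unif_dist d (C \<alpha> \<beta> \<beta>') (C \<beta> \<beta> \<gamma>)" by (rule rho_le[OF a c A G])
  also have "\<dots> \<le> max (unif_dist d \<alpha> \<beta>) (unif_dist d \<beta>' \<gamma>)" by (rule ud_le[OF pw])
  also have "\<dots> < r" using m1 m2 by simp
  finally show ?thesis .
qed

end



lemma ueq:
  assumes ms1: "Metric_space M d1" and ms2: "Metric_space M d2"
    and t: "Metric_space.mtopology M d1 = Metric_space.mtopology M d2"
    and cpt: "compact_space (Metric_space.mtopology M d2)" and e: "\<epsilon> > 0"
  shows "\<exists>\<delta>>0. \<forall>x\<in>M. \<forall>y\<in>M. d2 y x < \<delta> \<longrightarrow> d1 y x < \<epsilon>"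
proof -
  have "uniformly_continuous_map (metric (M,d2)) (metric (M,d1)) id"
  proof (rule continuous_imp_uniformly_continuous_map, rule conjI)
    show "compact_space (mtopology_of (metric (M, d2)))"
      using cpt by (simp add: Metric_space.mtopology_of[OF ms2])
    show "continuous_map (mtopology_of (metric (M, d2))) (mtopology_of (metric (M, d1))) id"
      using t by (simp add: Metric_space.mtopology_of[OF ms2] Metric_space.mtopology_of[OF ms1])
  qed
  then have "\<forall>\<epsilon>>0. \<exists>\<delta>>0. \<forall>x\<in>M. \<forall>y\<in>M. d2 y x < \<delta> \<longrightarrow> d1 y x < \<epsilon>"
    unfolding uniformly_continuous_map_def
    by (simp add: Metric_space.mspace_metric[OF ms1] Metric_space.mspace_metric[OF ms2]
        Metric_space.mdist_metric[OF ms1] Metric_space.mdist_metric[OF ms2])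
  then show ?thesis using e by blast
qed

lemma ball_open:
  fixes a :: "((real^'n) \<Rightarrow> 'a) set"
  assumes p1: "pm X x0 d1" and p2: "pm X x0 d2" and a: "a \<in> pi_n X x0" and r: "r > 0"
  shows "openin (pi_n_topology X x0 d2) {b \<in> pi_n X x0. rho d1 a b < r}"
proof -
  have ms1: "Metric_space (topspace X) d1" and mt1: "Metric_space.mtopology (topspace X) d1 = X"
    using p1 unfolding pm_def by auto
  have ms2: "Metric_space (topspace X) d2" and mt2: "Metric_space.mtopology (topspace X) d2 = X"
    and cpt: "compact_space X"
    using p2 unfolding pm_def by auto
  obtain \<delta> where \<delta>: "\<delta> > 0" "\<forall>x\<in>topspace X. \<forall>y\<in>topspace X. d2 y x < \<delta> \<longrightarrow> d1 y x < r/2"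
    using ueq[OF ms1 ms2 _ _, of "r/2"] mt1 mt2 cpt r by auto
  show ?thesis
  proof (subst openin_subopen, intro ballI)
    fix b0 assume b0: "b0 \<in> {b \<in> pi_n X x0. rho d1 a b < r}"
    then have b0p: "b0 \<in> pi_n X x0" and ab0: "rho d1 a b0 < r" by auto
    define T where "T = {b \<in> pi_n X x0. rho d2 b0 b < \<delta>}"
    have "openin (pi_n_topology X x0 d2) T"
      unfolding pi_n_topology_def T_def
      by (rule topology_generated_by_Basis) (use b0p \<delta>(1) in blast)
    moreover have "b0 \<in> T" unfolding T_def using pm.rho_self[OF p2 b0p] \<delta>(1) b0p by simp
    moreover have "T \<subseteq> {b \<in> pi_n X x0. rho d1 a b < r}"
    proof
      fix b assume "b \<in> T"
      then have bp: "b \<in> pi_n X x0" and lt: "rho d2 b0 b < \<delta>" unfolding T_def by auto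
      obtain \<alpha> \<beta> where \<alpha>: "\<alpha> \<in> b0" and \<beta>: "\<beta> \<in> b" and u: "unif_dist d2 \<alpha> \<beta> < \<delta>"
        using pm.rho_lt[OF p2 b0p bp lt] by blast
      have oa: "\<alpha> \<in> Omega X x0" and ob: "\<beta> \<in> Omega X x0"
        using class_sub[OF b0p \<alpha>] class_sub[OF bp \<beta>] by this+
      have "d1 (\<alpha> t) (\<beta> t) \<le> r/2" for t
      proof -
        have "d2 (\<alpha> t) (\<beta> t) < \<delta>" using pm.ud_ge[OF p2 oa ob, of t] u by linarith
        then show ?thesis using \<delta>(2) omega_top[OF oa, of t] omega_top[OF ob, of t] by force
      qed
      then have "unif_dist d1 \<alpha> \<beta> \<le> r/2" by (rule pm.ud_le[OF p1])
      then have "rho d1 b0 b < r" using pm.rho_le[OF p1 b0p bp \<alpha> \<beta>] r by linarith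
      then have "rho d1 a b < r" using pm.ultra[OF p1 a b0p bp ab0] by blast
      then show "b \<in> {b \<in> pi_n X x0. rho d1 a b < r}" using bp by blast
    qed
    ultimately show "\<exists>T. openin (pi_n_topology X x0 d2) T \<and> b0 \<in> T \<and> T \<subseteq> {b \<in> pi_n X x0. rho d1 a b < r}"
      by blast
  qed
qed

lemma top_sub:
  assumes p1: "pm X x0 d1" and p2: "pm X x0 d2"
    and S: "openin (pi_n_topology X x0 d1 :: ((real^'n) \<Rightarrow> 'a) set topology) S"
  shows "openin (pi_n_topology X x0 d2 :: ((real^'n) \<Rightarrow> 'a) set topology) S"
proof -
  have g: "generate_topology_on {{b \<in> pi_n X x0. rho d1 a b < r} | a r. a \<in> pi_n X x0 \<and> r > 0} S"
    using S unfolding pi_n_topology_def openin_topology_generated_by_iff .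
  show ?thesis
  proof (rule generate_topology_on_coarsest[OF istopology_openin _ g])
    fix U assume "U \<in> {{b \<in> pi_n X x0. rho d1 a b < r} | a r. a \<in> pi_n X x0 \<and> r > (0::real)}"
    then obtain a r where "U = {b \<in> pi_n X x0. rho d1 a b < r}" "a \<in> pi_n X x0" "r > 0" by blast
    then show "openin (pi_n_topology X x0 d2) U" using ball_open[OF p1 p2] by blast
  qed
qed

theorem theorem4p10:
  fixes X :: "'a topology" and x0 :: 'a
    and d1 d2 :: "'a \<Rightarrow> 'a \<Rightarrow> real"
  assumes "path_connected_space X" and "compact_space X" and "metrizable_space X"
    and "x0 \<in> topspace X"
    and "Metric_space (topspace X) d1" and "Metric_space.mtopology (topspace X) d1 = X"
    and "Metric_space (topspace X) d2" and "Metric_space.mtopology (topspace X) d2 = X"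
  shows "(pi_n_topology X x0 d1 :: ((real^'n) \<Rightarrow> 'a) set topology)
           homeomorphic_space (pi_n_topology X x0 d2 :: ((real^'n) \<Rightarrow> 'a) set topology)"
proof -
  have p1: "pm X x0 d1" and p2: "pm X x0 d2" unfolding pm_def using assms by auto
  have "(pi_n_topology X x0 d1 :: ((real^'n) \<Rightarrow> 'a) set topology) = pi_n_topology X x0 d2"
    using top_sub[OF p1 p2] top_sub[OF p2 p1] by (auto simp: topology_eq)
  then show ?thesis by (simp add: homeomorphic_space_refl)
qed

end
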